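(* Let $k=3$, let $\{e_1,e_2,e_3\}$ be an orthonormal basis of $\mathbb{C}^3$, $u=(e_1+e_2+e_3)/\sqrt3$, $v=(e_1+e_3)/\sqrt2$, and let \[H=0,\quad L_0=e_1u^*,\quad L_1=2vv^*+e_2e_2^*,\quad C_2=ue_1^*,\] with $I_b=\{0,1\}$, $I_p=\{2\}$. Let $\mathcal{L}(\rho)=\sum_{i\in\{0,1\}}\big(L_i\rho L_i^*-\tfrac12\{L_i^*L_i,\rho\}\big)+C_2\rho C_2^*-\tfrac12\{C_2^*C_2,\rho\}$. Then condition ($\mathcal{L}$-erg) holds and the unique $\rho_{\mathrm{inv}}\in\mathcal{D}_3$ with $\mathcal{L}(\rho_{\mathrm{inv}})=0$ is positive definite.
   Context: $\mathcal{D}_3=\{\rho\in M_3(\mathbb{C}):\rho\ge0,\operatorname{tr}\rho=1\}$. Condition ($\mathcal{L}$-erg): there exists a unique nonzero minimal orthogonal projection $\pi$ such that $\mathcal{L}(\pi M_3(\mathbb{C})\pi)\subset\pi M_3(\mathbb{C})\pi$; it implies $\mathcal{L}$ has a unique zero in $\mathcal{D}_3$. *)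

theory Defs
  imports "HOL-Analysis.Analysis"
begin

type_synonym cvec3 = "complex ^ 3"
type_synonym cmat3 = "complex ^ 3 ^ 3"

definition cinner :: "complex ^ 'n \<Rightarrow> complex ^ 'n \<Rightarrow> complex" where
  "cinner x y = (\<Sum>i\<in>UNIV. cnj (x $ i) * y $ i)"

definition adj :: "complex ^ 'n ^ 'n \<Rightarrow> complex ^ 'n ^ 'n" where
  "adj A = (\<chi> i j. cnj (A $ j $ i))"

definition outer :: "complex ^ 'n \<Rightarrow> complex ^ 'n \<Rightarrow> complex ^ 'n ^ 'n" where
  "outer x y = (\<chi> i j. x $ i * cnj (y $ j))"

definition csmult :: "complex \<Rightarrow> complex ^ 'n ^ 'n \<Rightarrow> complex ^ 'n ^ 'n" where
  "csmult c A = (\<chi> i j. c * A $ i $ j)"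

definition mtrace :: "complex ^ 'n ^ 'n \<Rightarrow> complex" where
  "mtrace A = (\<Sum>i\<in>UNIV. A $ i $ i)"

definition psd :: "complex ^ 'n ^ 'n \<Rightarrow> bool" where
  "psd A \<longleftrightarrow> (\<forall>x. Im (cinner x (A *v x)) = 0 \<and> Re (cinner x (A *v x)) \<ge> 0)"

definition posdef :: "complex ^ 'n ^ 'n \<Rightarrow> bool" where
  "posdef A \<longleftrightarrow> (\<forall>x. x \<noteq> 0 \<longrightarrow> Im (cinner x (A *v x)) = 0 \<and> Re (cinner x (A *v x)) > 0)"

definition density_matrices :: "(complex ^ 'n ^ 'n) set" where
  "density_matrices = {\<rho>. psd \<rho> \<and> mtrace \<rho> = 1}"

definition dissip :: "complex ^ 'n ^ 'n \<Rightarrow> complex ^ 'n ^ 'n \<Rightarrow> complex ^ 'n ^ 'n" where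
  "dissip A \<rho> = A ** \<rho> ** adj A - csmult (1/2) (adj A ** A ** \<rho> + \<rho> ** (adj A ** A))"

definition lindblad :: "complex ^ 'n ^ 'n \<Rightarrow> (complex ^ 'n ^ 'n) list
    \<Rightarrow> complex ^ 'n ^ 'n \<Rightarrow> complex ^ 'n ^ 'n" where
  "lindblad H Ls \<rho> = csmult (- \<i>) (H ** \<rho> - \<rho> ** H) + sum_list (map (\<lambda>A. dissip A \<rho>) Ls)"

definition orth_proj :: "complex ^ 'n ^ 'n \<Rightarrow> bool" where
  "orth_proj P \<longleftrightarrow> P ** P = P \<and> adj P = P"

definition corner_invariant :: "(complex ^ 'n ^ 'n \<Rightarrow> complex ^ 'n ^ 'n) \<Rightarrow> complex ^ 'n ^ 'n \<Rightarrow> bool" where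
  "corner_invariant L P \<longleftrightarrow> (\<forall>X. \<exists>Y. L (P ** X ** P) = P ** Y ** P)"

definition inv_proj :: "(complex ^ 'n ^ 'n \<Rightarrow> complex ^ 'n ^ 'n) \<Rightarrow> complex ^ 'n ^ 'n \<Rightarrow> bool" where
  "inv_proj L P \<longleftrightarrow> P \<noteq> 0 \<and> orth_proj P \<and> corner_invariant L P"

text \<open>Minimal: no other nonzero invariant orthogonal projection Q \<le> P (for projections,
  Q \<le> P iff Q P = Q).\<close>
definition minimal_inv_proj :: "(complex ^ 'n ^ 'n \<Rightarrow> complex ^ 'n ^ 'n) \<Rightarrow> complex ^ 'n ^ 'n \<Rightarrow> bool" where
  "minimal_inv_proj L P \<longleftrightarrow> inv_proj L P \<and> (\<forall>Q. inv_proj L Q \<and> Q ** P = Q \<longrightarrow> Q = P)"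

definition L_erg :: "(complex ^ 'n ^ 'n \<Rightarrow> complex ^ 'n ^ 'n) \<Rightarrow> bool" where
  "L_erg L \<longleftrightarrow> (\<exists>!P. minimal_inv_proj L P)"

end

theory Submission
  imports Defs
begin

lemma adj_mult: "adj (A ** B) = adj B ** adj (A :: complex^'n^'n)"
  by (simp add: adj_def matrix_matrix_mult_def vec_eq_iff mult.commute)
lemma adj_adj[simp]: "adj (adj A) = A"
  by (simp add: adj_def vec_eq_iff)
lemma adj_add: "adj (A + B) = adj A + adj B"
  by (simp add: adj_def vec_eq_iff)
lemma adj_diff: "adj (A - B) = adj A - adj B"
  by (simp add: adj_def vec_eq_iff)
lemma adj_csmult: "adj (csmult c A) = csmult (cnj c) (adj A)"
  by (simp add: adj_def csmult_def vec_eq_iff)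
lemma adj_mat1[simp]: "adj (mat 1 :: complex^'n^'n) = mat 1"
  by (simp add: adj_def mat_def vec_eq_iff)
lemma adj_zero[simp]: "adj (0 :: complex^'n^'n) = 0"
  by (simp add: adj_def vec_eq_iff)
lemma csmult_mult_left: "csmult c A ** B = csmult c (A ** (B::complex^'n^'n))"
  by (simp add: csmult_def matrix_matrix_mult_def vec_eq_iff sum_distrib_left mult.assoc)
lemma csmult_mult_right: "A ** csmult c B = csmult c (A ** (B::complex^'n^'n))"
  by (simp add: csmult_def matrix_matrix_mult_def vec_eq_iff sum_distrib_left mult_ac)
lemma csmult_add: "csmult c (A + B) = csmult c A + csmult c (B::complex^'n^'n)"
  by (simp add: csmult_def vec_eq_iff algebra_simps)
lemma csmult_diff: "csmult c (A - B) = csmult c A - csmult c (B::complex^'n^'n)"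
  by (simp add: csmult_def vec_eq_iff algebra_simps)
lemma csmult_zero[simp]: "csmult c (0::complex^'n^'n) = 0"
  by (simp add: csmult_def vec_eq_iff)
lemma csmult_csmult: "csmult c (csmult d A) = csmult (c*d) (A::complex^'n^'n)"
  by (simp add: csmult_def vec_eq_iff)
lemma matrix_diff_ldistrib: "(A::complex^'n^'n) ** (B - C) = A ** B - A ** C"
  by (simp add: matrix_matrix_mult_def vec_eq_iff sum_subtractf algebra_simps)
lemma matrix_diff_rdistrib: "(B - C) ** (A::complex^'n^'n) = B ** A - C ** A"
  by (simp add: matrix_matrix_mult_def vec_eq_iff sum_subtractf algebra_simps)
lemma matrix_add_rdistrib': "(B + C) ** (A::complex^'n^'n) = B ** A + C ** A"
  by (simp add: matrix_matrix_mult_def vec_eq_iff sum.distrib algebra_simps)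

lemma outer_left: "(A::complex^'n^'n) ** outer x y = outer (A *v x) y"
  by (simp add: outer_def matrix_matrix_mult_def matrix_vector_mult_def vec_eq_iff sum_distrib_right mult.assoc)
lemma outer_right: "outer x y ** adj (B::complex^'n^'n) = outer x (B *v y)"
  by (simp add: outer_def adj_def matrix_matrix_mult_def matrix_vector_mult_def vec_eq_iff
      sum_distrib_left mult_ac)
lemma outer_right': "outer x y ** (B::complex^'n^'n) = outer x (adj B *v y)"
  using outer_right[of x y "adj B"] by simp
lemma outer_zero1[simp]: "outer 0 y = 0" by (simp add: outer_def vec_eq_iff)
lemma outer_zero2[simp]: "outer x 0 = 0" by (simp add: outer_def vec_eq_iff)

lemma cinner_swap: "cinner y x = cnj (cinner x y)"
  by (simp add: cinner_def mult.commute)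

lemma cinner_self: "cinner w w = complex_of_real (\<Sum>i\<in>UNIV. (cmod (w$i))^2)"
  unfolding cinner_def of_real_sum
  by (rule sum.cong[OF refl]) (metis complex_norm_square mult.commute)

lemma cinner_self_Re: "Re (cinner w w) = (\<Sum>i\<in>UNIV. (cmod (w$i))^2)"
  by (simp add: cinner_self)
lemma cinner_self_Im: "Im (cinner w w) = 0"
  by (simp add: cinner_self)
lemma cinner_self_ge: "Re (cinner w w) \<ge> 0"
  by (simp add: cinner_self_Re sum_nonneg)
lemma cinner_self_eq0: "Re (cinner w w) = 0 \<longleftrightarrow> w = 0"
proof
  assume "Re (cinner w w) = 0"
  then have "\<forall>i\<in>UNIV. (cmod (w$i))^2 = 0"
    unfolding cinner_self_Re by (subst sum_nonneg_eq_0_iff[symmetric]) auto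
  then show "w = 0" by (simp add: vec_eq_iff)
qed (simp add: cinner_def)

lemma mtrace_outer: "mtrace (outer x y) = cinner y x"
  by (simp add: mtrace_def outer_def cinner_def mult.commute)
lemma mtrace_add: "mtrace (A + B) = mtrace A + mtrace B"
  by (simp add: mtrace_def sum.distrib)

lemma dissip_conj:
  fixes W :: "complex^'n^'n"
  assumes "adj W ** W = mat 1" "W ** adj W = mat 1"
  shows "dissip (W ** K ** adj W) \<rho> = W ** dissip K (adj W ** \<rho> ** W) ** adj W"
proof -
  have a: "adj W ** (W ** X) = X" for X using assms(1) by (simp add: matrix_mul_assoc)
  have b: "W ** (adj W ** X) = X" for X using assms(2) by (simp add: matrix_mul_assoc)
  have c: "X ** (W ** adj W) = X" for X using assms(2) by (simp add: matrix_mul_assoc)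
  show ?thesis
    unfolding dissip_def
    by (simp add: adj_mult matrix_mul_assoc[symmetric] a b c csmult_mult_left csmult_mult_right
        matrix_diff_ldistrib matrix_diff_rdistrib matrix_add_ldistrib matrix_add_rdistrib')
qed

lemma lindblad_conj:
  fixes W :: "complex^'n^'n"
  assumes "adj W ** W = mat 1" "W ** adj W = mat 1"
  shows "lindblad 0 [W ** K0 ** adj W, W ** K1 ** adj W, W ** K2 ** adj W] \<rho>
     = W ** lindblad 0 [K0, K1, K2] (adj W ** \<rho> ** W) ** adj W"
  unfolding lindblad_def
  by (simp add: dissip_conj[OF assms] matrix_add_ldistrib matrix_add_rdistrib')

definition bv :: "3 \<Rightarrow> complex^3" where "bv k = (\<chi> i. if i = k then 1 else 0)"
definition one3 :: "complex^3" where "one3 = (\<chi> i. 1)"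
definition A0 :: "complex^3^3" where "A0 = outer (bv 1) one3"
definition A2 :: "complex^3^3" where "A2 = outer one3 (bv 1)"
definition B1 :: "complex^3^3" where
  "B1 = (\<chi> i j. if (i = 2 \<and> j = 2) \<or> (i \<noteq> 2 \<and> j \<noteq> 2) then 1 else 0)"
definition Lc :: "complex^3^3 \<Rightarrow> complex^3^3" where
  "Lc \<sigma> = csmult (1/3) (dissip A0 \<sigma>) + dissip B1 \<sigma> + csmult (1/3) (dissip A2 \<sigma>)"

lemmas Lc_simps = Lc_def dissip_def matrix_matrix_mult_def sum_3 adj_def csmult_def outer_def
     A0_def A2_def B1_def bv_def one3_def

lemma Lc_e11: "Lc (\<sigma>::complex^3^3) $ 1 $ 1 = (-5/3) * \<sigma>$1$1 + (1/6) * \<sigma>$1$2 + (1/6) * \<sigma>$1$3 + (1/6) * \<sigma>$2$1 + (1/3) * \<sigma>$2$2 + (1/3) * \<sigma>$2$3 + (1/6) * \<sigma>$3$1 + (1/3) * \<sigma>$3$2 + (4/3) * \<sigma>$3$3"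
  by (simp add: Lc_simps algebra_simps)

lemma Lc_e12: "Lc (\<sigma>::complex^3^3) $ 1 $ 2 = (1/6) * \<sigma>$1$1 + (-4/3) * \<sigma>$1$2 + (-1/6) * \<sigma>$1$3 + (-1/6) * \<sigma>$2$2 + (-1/6) * \<sigma>$3$2"
  by (simp add: Lc_simps algebra_simps)

lemma Lc_e13: "Lc (\<sigma>::complex^3^3) $ 1 $ 3 = (1/6) * \<sigma>$1$1 + (-1/6) * \<sigma>$1$2 + (-11/6) * \<sigma>$1$3 + (-1/6) * \<sigma>$2$3 + (1) * \<sigma>$3$1 + (-1/6) * \<sigma>$3$3"
  by (simp add: Lc_simps algebra_simps)

lemma Lc_e21: "Lc (\<sigma>::complex^3^3) $ 2 $ 1 = (1/6) * \<sigma>$1$1 + (-4/3) * \<sigma>$2$1 + (-1/6) * \<sigma>$2$2 + (-1/6) * \<sigma>$2$3 + (-1/6) * \<sigma>$3$1"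
  by (simp add: Lc_simps algebra_simps)

lemma Lc_e22: "Lc (\<sigma>::complex^3^3) $ 2 $ 2 = (1/3) * \<sigma>$1$1 + (-1/6) * \<sigma>$1$2 + (-1/6) * \<sigma>$2$1 + (-1/3) * \<sigma>$2$2 + (-1/6) * \<sigma>$2$3 + (-1/6) * \<sigma>$3$2"
  by (simp add: Lc_simps algebra_simps)

lemma Lc_e23: "Lc (\<sigma>::complex^3^3) $ 2 $ 3 = (1/3) * \<sigma>$1$1 + (-1/6) * \<sigma>$1$3 + (-1/6) * \<sigma>$2$1 + (-1/6) * \<sigma>$2$2 + (-5/6) * \<sigma>$2$3 + (-1/6) * \<sigma>$3$3"
  by (simp add: Lc_simps algebra_simps)

lemma Lc_e31: "Lc (\<sigma>::complex^3^3) $ 3 $ 1 = (1/6) * \<sigma>$1$1 + (1) * \<sigma>$1$3 + (-1/6) * \<sigma>$2$1 + (-11/6) * \<sigma>$3$1 + (-1/6) * \<sigma>$3$2 + (-1/6) * \<sigma>$3$3"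
  by (simp add: Lc_simps algebra_simps)

lemma Lc_e32: "Lc (\<sigma>::complex^3^3) $ 3 $ 2 = (1/3) * \<sigma>$1$1 + (-1/6) * \<sigma>$1$2 + (-1/6) * \<sigma>$2$2 + (-1/6) * \<sigma>$3$1 + (-5/6) * \<sigma>$3$2 + (-1/6) * \<sigma>$3$3"
  by (simp add: Lc_simps algebra_simps)

lemma Lc_e33: "Lc (\<sigma>::complex^3^3) $ 3 $ 3 = (4/3) * \<sigma>$1$1 + (-1/6) * \<sigma>$1$3 + (-1/6) * \<sigma>$2$3 + (-1/6) * \<sigma>$3$1 + (-1/6) * \<sigma>$3$2 + (-4/3) * \<sigma>$3$3"
  by (simp add: Lc_simps algebra_simps)

lemma Lc_c12: "(\<sigma>::complex^3^3) = \<sigma> \<Longrightarrow> \<sigma>$1$2 = (1/52) * Lc \<sigma> $ 1 $ 1 + (-389/468) * Lc \<sigma> $ 1 $ 2 + (29/234) * Lc \<sigma> $ 1 $ 3 + (-25/468) * Lc \<sigma> $ 2 $ 1 + (25/52) * Lc \<sigma> $ 2 $ 2 + (-4/39) * Lc \<sigma> $ 2 $ 3 + (8/117) * Lc \<sigma> $ 3 $ 1 + (5/78) * Lc \<sigma> $ 3 $ 2"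
  unfolding Lc_e11 Lc_e12 Lc_e13 Lc_e21 Lc_e22 Lc_e23 Lc_e31 Lc_e32 Lc_e33 by (simp add: field_simps)

lemma Lc_c13: "(\<sigma>::complex^3^3) = \<sigma> \<Longrightarrow> \<sigma>$1$3 = (-7/52) * Lc \<sigma> $ 1 $ 1 + (29/234) * Lc \<sigma> $ 1 $ 2 + (-799/936) * Lc \<sigma> $ 1 $ 3 + (8/117) * Lc \<sigma> $ 2 $ 1 + (-19/52) * Lc \<sigma> $ 2 $ 2 + (55/312) * Lc \<sigma> $ 2 $ 3 + (-461/936) * Lc \<sigma> $ 3 $ 1 + (29/312) * Lc \<sigma> $ 3 $ 2"
  unfolding Lc_e11 Lc_e12 Lc_e13 Lc_e21 Lc_e22 Lc_e23 Lc_e31 Lc_e32 Lc_e33 by (simp add: field_simps)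

lemma Lc_c21: "(\<sigma>::complex^3^3) = \<sigma> \<Longrightarrow> \<sigma>$2$1 = (1/52) * Lc \<sigma> $ 1 $ 1 + (-25/468) * Lc \<sigma> $ 1 $ 2 + (8/117) * Lc \<sigma> $ 1 $ 3 + (-389/468) * Lc \<sigma> $ 2 $ 1 + (25/52) * Lc \<sigma> $ 2 $ 2 + (5/78) * Lc \<sigma> $ 2 $ 3 + (29/234) * Lc \<sigma> $ 3 $ 1 + (-4/39) * Lc \<sigma> $ 3 $ 2"
  unfolding Lc_e11 Lc_e12 Lc_e13 Lc_e21 Lc_e22 Lc_e23 Lc_e31 Lc_e32 Lc_e33 by (simp add: field_simps)

lemma Lc_c22: "(\<sigma>::complex^3^3) = \<sigma> \<Longrightarrow> \<sigma>$2$2 - \<sigma>$1$1 = (2/13) * Lc \<sigma> $ 1 $ 1 + (6/13) * Lc \<sigma> $ 1 $ 2 + (-3/13) * Lc \<sigma> $ 1 $ 3 + (6/13) * Lc \<sigma> $ 2 $ 1 + (-54/13) * Lc \<sigma> $ 2 $ 2 + (11/13) * Lc \<sigma> $ 2 $ 3 + (-3/13) * Lc \<sigma> $ 3 $ 1 + (11/13) * Lc \<sigma> $ 3 $ 2"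
  unfolding Lc_e11 Lc_e12 Lc_e13 Lc_e21 Lc_e22 Lc_e23 Lc_e31 Lc_e32 Lc_e33 by (simp add: field_simps)

lemma Lc_c23: "(\<sigma>::complex^3^3) = \<sigma> \<Longrightarrow> \<sigma>$2$3 = (-9/52) * Lc \<sigma> $ 1 $ 1 + (-4/39) * Lc \<sigma> $ 1 $ 2 + (55/312) * Lc \<sigma> $ 1 $ 3 + (5/78) * Lc \<sigma> $ 2 $ 1 + (35/52) * Lc \<sigma> $ 2 $ 2 + (-151/104) * Lc \<sigma> $ 2 $ 3 + (29/312) * Lc \<sigma> $ 3 $ 1 + (-21/104) * Lc \<sigma> $ 3 $ 2"
  unfolding Lc_e11 Lc_e12 Lc_e13 Lc_e21 Lc_e22 Lc_e23 Lc_e31 Lc_e32 Lc_e33 by (simp add: field_simps)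

lemma Lc_c31: "(\<sigma>::complex^3^3) = \<sigma> \<Longrightarrow> \<sigma>$3$1 = (-7/52) * Lc \<sigma> $ 1 $ 1 + (8/117) * Lc \<sigma> $ 1 $ 2 + (-461/936) * Lc \<sigma> $ 1 $ 3 + (29/234) * Lc \<sigma> $ 2 $ 1 + (-19/52) * Lc \<sigma> $ 2 $ 2 + (29/312) * Lc \<sigma> $ 2 $ 3 + (-799/936) * Lc \<sigma> $ 3 $ 1 + (55/312) * Lc \<sigma> $ 3 $ 2"
  unfolding Lc_e11 Lc_e12 Lc_e13 Lc_e21 Lc_e22 Lc_e23 Lc_e31 Lc_e32 Lc_e33 by (simp add: field_simps)

lemma Lc_c32: "(\<sigma>::complex^3^3) = \<sigma> \<Longrightarrow> \<sigma>$3$2 = (-9/52) * Lc \<sigma> $ 1 $ 1 + (5/78) * Lc \<sigma> $ 1 $ 2 + (29/312) * Lc \<sigma> $ 1 $ 3 + (-4/39) * Lc \<sigma> $ 2 $ 1 + (35/52) * Lc \<sigma> $ 2 $ 2 + (-21/104) * Lc \<sigma> $ 2 $ 3 + (55/312) * Lc \<sigma> $ 3 $ 1 + (-151/104) * Lc \<sigma> $ 3 $ 2"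
  unfolding Lc_e11 Lc_e12 Lc_e13 Lc_e21 Lc_e22 Lc_e23 Lc_e31 Lc_e32 Lc_e33 by (simp add: field_simps)

lemma Lc_c33: "(\<sigma>::complex^3^3) = \<sigma> \<Longrightarrow> \<sigma>$3$3 - \<sigma>$1$1 = (43/52) * Lc \<sigma> $ 1 $ 1 + (-1/52) * Lc \<sigma> $ 1 $ 2 + (7/52) * Lc \<sigma> $ 1 $ 3 + (-1/52) * Lc \<sigma> $ 2 $ 1 + (35/52) * Lc \<sigma> $ 2 $ 2 + (9/52) * Lc \<sigma> $ 2 $ 3 + (7/52) * Lc \<sigma> $ 3 $ 1 + (9/52) * Lc \<sigma> $ 3 $ 2"
  unfolding Lc_e11 Lc_e12 Lc_e13 Lc_e21 Lc_e22 Lc_e23 Lc_e31 Lc_e32 Lc_e33 by (simp add: field_simps)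

lemma Lc_kernel:
  fixes \<sigma> :: "complex^3^3"
  assumes "Lc \<sigma> = 0"
  shows "\<sigma> = csmult (\<sigma>$1$1) (mat 1)"
proof -
  have z: "Lc \<sigma> $ i $ j = 0" for i j using assms by simp
  have "\<sigma>$1$2 = 0" "\<sigma>$1$3 = 0" "\<sigma>$2$1 = 0" "\<sigma>$2$3 = 0" "\<sigma>$3$1 = 0" "\<sigma>$3$2 = 0"
    "\<sigma>$2$2 - \<sigma>$1$1 = 0" "\<sigma>$3$3 - \<sigma>$1$1 = 0"
    by (subst Lc_c12 Lc_c13 Lc_c21 Lc_c23 Lc_c31 Lc_c32 Lc_c22 Lc_c33, rule refl, simp add: z)+
  then show ?thesis by (simp add: vec_eq_iff forall_3 csmult_def mat_def)
qed

lemma Lc_id: "Lc (csmult c (mat 1)) = 0"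
  by (simp add: vec_eq_iff forall_3 Lc_e11 Lc_e12 Lc_e13 Lc_e21 Lc_e22 Lc_e23 Lc_e31 Lc_e32 Lc_e33
      csmult_def mat_def)

lemma mat_vec_diff_rdistrib: "((A::complex^'n^'n) - B) *v x = A *v x - B *v x"
  by (simp add: matrix_vector_mult_def vec_eq_iff sum_subtractf algebra_simps)

lemma dissip_sandwich:
  fixes Q K :: "complex^'n^'n"
  assumes "adj Q = Q" "Q *v \<psi> = 0"
  shows "Q ** dissip K (outer \<psi> \<psi>) ** Q = outer (Q *v (K *v \<psi>)) (Q *v (K *v \<psi>))"
proof -
  have q: "(Q ** A) *v \<psi> = 0" if "A = mat 1" for A using assms(2) that by simp
  show ?thesis
  unfolding dissip_def
  by (simp add: matrix_mul_assoc csmult_mult_left csmult_mult_right matrix_diff_ldistrib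
      matrix_diff_rdistrib matrix_add_ldistrib matrix_add_rdistrib' outer_left outer_right'
      assms matrix_vector_mul_assoc)
qed

lemma lindblad_sandwich:
  fixes Q K0 K1 K2 :: "complex^'n^'n"
  assumes "adj Q = Q" "Q *v \<psi> = 0"
  shows "Q ** lindblad 0 [K0, K1, K2] (outer \<psi> \<psi>) ** Q =
     outer (Q *v (K0 *v \<psi>)) (Q *v (K0 *v \<psi>)) + outer (Q *v (K1 *v \<psi>)) (Q *v (K1 *v \<psi>))
     + outer (Q *v (K2 *v \<psi>)) (Q *v (K2 *v \<psi>))"
  unfolding lindblad_def
  by (simp add: matrix_add_ldistrib matrix_add_rdistrib' dissip_sandwich[OF assms] add.assoc)

lemma sum3_zero:
  assumes "outer a a + outer b b + outer c c = 0"
  shows "a = 0 \<and> b = 0 \<and> c = 0"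
proof -
  have "mtrace (outer a a + outer b b + outer c c) = 0" using assms by (simp add: mtrace_def)
  then have "Re (cinner a a + cinner b b + cinner c c) = 0"
    by (simp add: mtrace_add mtrace_outer)
  then have "Re (cinner a a) + Re (cinner b b) + Re (cinner c c) = 0"
    by simp
  moreover have "Re (cinner a a) \<ge> 0" "Re (cinner b b) \<ge> 0" "Re (cinner c c) \<ge> 0"
    by (rule cinner_self_ge)+
  ultimately have "Re (cinner a a) = 0" "Re (cinner b b) = 0" "Re (cinner c c) = 0" by linarith+
  then show ?thesis by (simp add: cinner_self_eq0)
qed

lemma inv_range:
  fixes P K0 K1 K2 :: "complex^'n^'n"
  assumes op: "orth_proj P" and ci: "corner_invariant (lindblad 0 [K0, K1, K2]) P"
  shows "P *v (K0 *v (P *v z)) = K0 *v (P *v z) \<and> P *v (K1 *v (P *v z)) = K1 *v (P *v z)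
     \<and> P *v (K2 *v (P *v z)) = K2 *v (P *v z)"
proof -
  define \<psi> where "\<psi> = P *v z"
  define Q where "Q = mat 1 - P"
  have PP: "P ** P = P" and aP: "adj P = P" using op by (auto simp: orth_proj_def)
  have aQ: "adj Q = Q" by (simp add: Q_def adj_diff aP)
  have QP: "Q ** P = 0" by (simp add: Q_def matrix_diff_rdistrib PP)
  have PQ: "P ** Q = 0" by (simp add: Q_def matrix_diff_ldistrib PP)
  have Qpsi: "Q *v \<psi> = 0" by (simp add: \<psi>_def matrix_vector_mul_assoc QP)
  obtain Y where Y: "lindblad 0 [K0, K1, K2] (P ** outer z z ** P) = P ** Y ** P"
    using ci unfolding corner_invariant_def by blast
  have "P ** outer z z ** P = outer \<psi> \<psi>"
    by (simp add: outer_left outer_right' aP \<psi>_def)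
  with Y have "Q ** lindblad 0 [K0, K1, K2] (outer \<psi> \<psi>) ** Q = Q ** P ** Y ** P ** Q" 
    by (simp add: matrix_mul_assoc)
  also have "\<dots> = 0" by (simp add: QP)
  finally have "outer (Q *v (K0 *v \<psi>)) (Q *v (K0 *v \<psi>)) + outer (Q *v (K1 *v \<psi>)) (Q *v (K1 *v \<psi>))
     + outer (Q *v (K2 *v \<psi>)) (Q *v (K2 *v \<psi>)) = 0"
    by (simp add: lindblad_sandwich[OF aQ Qpsi])
  then have "Q *v (K0 *v \<psi>) = 0 \<and> Q *v (K1 *v \<psi>) = 0 \<and> Q *v (K2 *v \<psi>) = 0"
    by (rule sum3_zero)
  then show ?thesis
    by (simp add: Q_def mat_vec_diff_rdistrib \<psi>_def[symmetric])
qed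

lemma csmult_mv: "csmult c A *v w = c *s (A *v (w::complex^'n))"
  by (simp add: csmult_def matrix_vector_mult_def vec_eq_iff sum_distrib_left mult.assoc)
lemma mv_smult: "(A::complex^'n^'n) *v (c *s w) = c *s (A *v w)"
  by (simp add: matrix_vector_mult_def vec_eq_iff sum_distrib_left mult_ac)
lemma smult_cancel: "(c::complex) \<noteq> 0 \<Longrightarrow> c *s a = c *s b \<Longrightarrow> a = (b::complex^'n)"
  by (simp add: vec_eq_iff)

lemma inv_scale:
  fixes P A :: "complex^'n^'n"
  assumes "c \<noteq> 0" "\<And>z. P *v (csmult c A *v (P *v z)) = csmult c A *v (P *v z)"
  shows "P *v (A *v (P *v z)) = A *v (P *v z)"
  using assms(2)[of z] by (simp add: csmult_mv mv_smult smult_cancel[OF assms(1)])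

lemma A0_mv: "A0 *v x = (x$1 + x$2 + x$3) *s bv 1"
  by (simp add: vec_eq_iff A0_def outer_def bv_def one3_def matrix_vector_mult_def sum_3)
lemma A2_mv: "A2 *v x = (x$1) *s one3"
  by (simp add: vec_eq_iff A2_def outer_def bv_def one3_def matrix_vector_mult_def sum_3)
lemma B1_mv: "B1 *v x = (\<chi> i. if i = 2 then x$2 else x$1 + x$3)"
  by (simp add: vec_eq_iff B1_def matrix_vector_mult_def sum_3 forall_3)

lemma proj_concrete:
  fixes P :: "complex^3^3"
  assumes op: "orth_proj P" and nz: "P \<noteq> 0"
    and i0: "\<And>z. P *v (A0 *v (P *v z)) = A0 *v (P *v z)"
    and i1: "\<And>z. P *v (B1 *v (P *v z)) = B1 *v (P *v z)"
    and i2: "\<And>z. P *v (A2 *v (P *v z)) = A2 *v (P *v z)"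
  shows "P = mat 1"
proof -
  have PP: "P ** P = P" using op by (simp add: orth_proj_def)
  define F where "F x \<longleftrightarrow> P *v x = x" for x
  have Fs: "F (c *s x)" if "F x" for c x using that by (simp add: F_def mv_smult)
  have Fs': "F x" if "F (c *s x)" "c \<noteq> 0" for c x
    using Fs[OF that(1), of "inverse c"] that(2) by (simp add: vector_smult_assoc)
  have Fa: "F (x + y)" if "F x" "F y" for x y using that by (simp add: F_def matrix_vector_right_distrib)
  have Fd: "F (x - y)" if "F x" "F y" for x y using that by (simp add: F_def matrix_vector_mult_diff_distrib)
  have FA0: "F (A0 *v x)" if "F x" for x using i0[of x] that by (simp add: F_def)
  have FA2: "F (A2 *v x)" if "F x" for x using i2[of x] that by (simp add: F_def)
  have FB1: "F (B1 *v x)" if "F x" for x using i1[of x] that by (simp add: F_def)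
  have one_bv1: "F (bv 1)" if "F one3" 
  proof -
    have "A0 *v one3 = 3 *s bv 1" by (simp add: A0_mv one3_def)
    then show ?thesis using FA0[OF that] Fs'[of 3 "bv 1"] by simp
  qed
  have c1: "F (bv 1)" if "F x" "x$1 \<noteq> 0" for x
    using FA2[OF that(1)] Fs'[of "x$1" one3] that(2) one_bv1 by (simp add: A2_mv)
  have c2: "F (bv 1)" if "F x" "x$1 + x$2 + x$3 \<noteq> 0" for x
    using FA0[OF that(1)] Fs'[of "x$1 + x$2 + x$3" "bv 1"] that(2) by (simp add: A0_mv)
  obtain z where z: "P *v z \<noteq> 0" using nz matrix_eq[of P 0] by auto
  define x where "x = P *v z"
  have Fx: "F x" by (simp add: F_def x_def matrix_vector_mul_assoc PP)
  have b1: "F (bv 1)"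
  proof (cases "x$1 \<noteq> 0 \<or> x$1 + x$2 + x$3 \<noteq> 0")
    case True then show ?thesis using c1 c2 Fx by blast
  next
    case False
    then have "x$1 = 0" "x$3 = - x$2" by (auto simp: eq_neg_iff_add_eq_0 add.commute)
    moreover have "x \<noteq> 0" using z x_def by simp
    ultimately have "x$2 \<noteq> 0" by (auto simp: vec_eq_iff forall_3)
    moreover have "(B1 *v x)$1 = - x$2" using \<open>x$1 = 0\<close> \<open>x$3 = - x$2\<close> by (simp add: B1_mv)
    ultimately show ?thesis using c1[OF FB1[OF Fx]] by simp
  qed
  have o3: "F one3" using FA2[OF b1] by (simp add: A2_mv bv_def)
  have "B1 *v bv 1 - bv 1 = bv 3" by (simp add: B1_mv bv_def vec_eq_iff forall_3)
  then have b3: "F (bv 3)" using Fd[OF FB1[OF b1] b1] by simp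
  have "one3 - bv 1 - bv 3 = bv 2" by (simp add: one3_def bv_def vec_eq_iff forall_3)
  then have b2: "F (bv 2)" using Fd[OF Fd[OF o3 b1] b3] by simp
  have pb: "P *v bv k = bv k" for k using b1 b2 b3 exhaust_3[of k] by (auto simp: F_def)
  have pv: "(P *v bv k) $ i = P $ i $ k" for k i
    using exhaust_3[of k] by (auto simp: matrix_vector_mult_def bv_def sum_3)
  have "P $ i $ k = (if i = k then 1 else 0)" for i k using pv[of k i] pb[of k] by (simp add: bv_def)
  then show ?thesis by (simp add: vec_eq_iff mat_def)
qed

definition uc :: "complex^3" where "uc = (1 / sqrt 3) *\<^sub>R (bv 1 + bv 2 + bv 3)"
definition vc :: "complex^3" where "vc = (1 / sqrt 2) *\<^sub>R (bv 1 + bv 3)"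
definition Kc0 :: "complex^3^3" where "Kc0 = outer (bv 1) uc"
definition Kc1 :: "complex^3^3" where "Kc1 = csmult 2 (outer vc vc) + outer (bv 2) (bv 2)"
definition Kc2 :: "complex^3^3" where "Kc2 = outer uc (bv 1)"
definition c3 :: complex where "c3 = complex_of_real (1 / sqrt 3)"

lemma scaleR_comp: "(r *\<^sub>R (x::complex^'n))$i = complex_of_real r * x$i"
  by (subst vector_scaleR_component) (rule scaleR_conv_of_real)

lemma c3_nz: "c3 \<noteq> 0" by (simp add: c3_def)
lemma c3_sq: "c3 * cnj c3 = 1/3"
proof -
  have "c3 * cnj c3 = complex_of_real ((1 / sqrt 3) * (1 / sqrt 3))"
    by (simp only: c3_def complex_cnj_complex_of_real of_real_mult)
  also have "(1 / sqrt 3) * (1 / sqrt 3) = (1/3::real)" by (simp add: divide_simps)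
  finally show ?thesis by simp
qed

lemma Kc0_eq: "Kc0 = csmult c3 A0"
  by (simp add: vec_eq_iff Kc0_def A0_def outer_def bv_def one3_def csmult_def uc_def c3_def
      scaleR_comp forall_3 of_real_def[symmetric])
lemma Kc2_eq: "Kc2 = csmult c3 A2"
  by (simp add: vec_eq_iff Kc2_def A2_def outer_def bv_def one3_def csmult_def uc_def c3_def
      scaleR_comp forall_3 of_real_def[symmetric])
lemma Kc1_eq: "Kc1 = B1"
proof -
  have h: "2 * (complex_of_real (1 / sqrt 2) * complex_of_real (1 / sqrt 2)) = 1"
  proof -
    have "2 * (complex_of_real (1 / sqrt 2) * complex_of_real (1 / sqrt 2))
       = complex_of_real (2 * ((1 / sqrt 2) * (1 / sqrt 2)))"
      by (simp only: of_real_mult of_real_numeral)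
    also have "2 * ((1 / sqrt 2) * (1 / sqrt 2)) = (1::real)" by (simp add: divide_simps)
    finally show ?thesis by simp
  qed
  show ?thesis
    by (simp add: vec_eq_iff forall_3 Kc1_def B1_def outer_def bv_def csmult_def vc_def
      scaleR_comp h)
qed

lemma dissip_scale: "dissip (csmult c A) \<rho> = csmult (c * cnj c) (dissip A (\<rho>::complex^'n^'n))"
  by (simp add: dissip_def adj_csmult csmult_mult_left csmult_mult_right csmult_csmult
      csmult_add csmult_diff mult_ac)

lemma Lc_lindblad: "lindblad 0 [Kc0, Kc1, Kc2] = Lc"
  by (rule ext) (simp add: lindblad_def Lc_def Kc0_eq Kc1_eq Kc2_eq dissip_scale c3_sq add.assoc)

definition Umat :: "complex^3 \<Rightarrow> complex^3 \<Rightarrow> complex^3 \<Rightarrow> complex^3^3" where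
  "Umat e1 e2 e3 = (\<chi> i j. if j = 1 then e1$i else if j = 2 then e2$i else e3$i)"

lemma Umat_bv: "Umat e1 e2 e3 *v bv 1 = e1" "Umat e1 e2 e3 *v bv 2 = e2" "Umat e1 e2 e3 *v bv 3 = e3"
  by (simp_all add: vec_eq_iff Umat_def bv_def matrix_vector_mult_def sum_3)

lemma Umat_unitary:
  assumes "cinner e1 e1 = 1" "cinner e2 e2 = 1" "cinner e3 e3 = 1"
    "cinner e1 e2 = 0" "cinner e1 e3 = 0" "cinner e2 e3 = 0"
  shows "adj (Umat e1 e2 e3) ** Umat e1 e2 e3 = mat 1"
proof -
  have s: "cinner e2 e1 = 0" "cinner e3 e1 = 0" "cinner e3 e2 = 0"
    using assms cinner_swap[of e2 e1] cinner_swap[of e3 e1] cinner_swap[of e3 e2] by simp_all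
  show ?thesis
    using assms s
    by (simp add: vec_eq_iff forall_3 Umat_def adj_def matrix_matrix_mult_def mat_def
        cinner_def[symmetric])
qed

lemma mv_scaleR: "(A::complex^'n^'n) *v (r *\<^sub>R x) = r *\<^sub>R (A *v x)"
  by (simp add: vec_eq_iff matrix_vector_mult_def scaleR_sum_right)

lemma outer_conj: "(A::complex^'n^'n) ** outer x y ** adj B = outer (A *v x) (B *v y)"
  by (simp add: outer_left outer_right)

lemma cinner_smult: "cinner x (c *s y) = c * cinner x y"
  by (simp add: cinner_def sum_distrib_left mult_ac)

lemma mtrace_id: "mtrace (csmult c (mat 1 :: complex^3^3)) = 3 * c"
  by (simp add: mtrace_def sum_3 csmult_def mat_def)

theorem proposition5p1:
  fixes e1 e2 e3 :: "complex ^ 3"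
  assumes orthonormal:
    "cinner e1 e1 = 1" "cinner e2 e2 = 1" "cinner e3 e3 = 1"
    "cinner e1 e2 = 0" "cinner e1 e3 = 0" "cinner e2 e3 = 0"
  defines "u \<equiv> (1 / sqrt 3) *\<^sub>R (e1 + e2 + e3)"
      and "v \<equiv> (1 / sqrt 2) *\<^sub>R (e1 + e3)"
  defines "H \<equiv> (0 :: complex ^ 3 ^ 3)"
      and "L0 \<equiv> outer e1 u"
      and "L1 \<equiv> csmult 2 (outer v v) + outer e2 e2"
      and "C2 \<equiv> outer u e1"
  defines "\<L> \<equiv> lindblad H [L0, L1, C2]"
  shows "L_erg \<L>
    \<and> (\<exists>!\<rho>. \<rho> \<in> density_matrices \<and> \<L> \<rho> = 0)
    \<and> (\<forall>\<rho>. \<rho> \<in> density_matrices \<and> \<L> \<rho> = 0 \<longrightarrow> posdef \<rho>)"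
proof -
  define U where "U = Umat e1 e2 e3"
  have UU1: "adj U ** U = mat 1" unfolding U_def by (rule Umat_unitary[OF orthonormal])
  have UU2: "U ** adj U = mat 1" using UU1 matrix_left_right_inverse by blast
  have r1: "X ** adj U ** U = X" "X ** U ** adj U = X" for X
    by (simp_all add: matrix_mul_assoc[symmetric] UU1 UU2)
  note simpU = matrix_mul_assoc UU1 UU2 r1
  have Ue: "U *v bv 1 = e1" "U *v bv 2 = e2" "U *v bv 3 = e3" unfolding U_def by (rule Umat_bv)+
  have uU: "u = U *v uc" by (simp add: u_def uc_def mv_scaleR matrix_vector_right_distrib Ue)
  have vU: "v = U *v vc" by (simp add: v_def vc_def mv_scaleR matrix_vector_right_distrib Ue)
  have L0U: "L0 = U ** Kc0 ** adj U"
    unfolding L0_def Kc0_def outer_conj uU Ue(1)[symmetric] ..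
  have C2U: "C2 = U ** Kc2 ** adj U"
    unfolding C2_def Kc2_def outer_conj uU Ue(1)[symmetric] ..
  have L1U: "L1 = U ** Kc1 ** adj U"
    unfolding L1_def Kc1_def
    by (simp add: matrix_add_ldistrib matrix_add_rdistrib' csmult_mult_left csmult_mult_right
        outer_conj vU Ue)
  have LL: "\<L> \<rho> = U ** Lc (adj U ** \<rho> ** U) ** adj U" for \<rho>
    unfolding \<L>_def H_def L0U L1U C2U lindblad_conj[OF UU1 UU2] Lc_lindblad ..
  have LcL: "Lc \<sigma> = adj U ** \<L> (U ** \<sigma> ** adj U) ** U" for \<sigma>
    unfolding LL by (simp add: simpU)
  define \<rho>0 :: "complex^3^3" where "\<rho>0 = csmult (1/3) (mat 1)"
  have L\<rho>0: "\<L> \<rho>0 = 0"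
    unfolding LL \<rho>0_def by (simp add: csmult_mult_left csmult_mult_right simpU Lc_id)
  have \<rho>0v: "\<rho>0 *v x = (1/3) *s x" for x by (simp add: \<rho>0_def csmult_mv)
  have \<rho>0q: "cinner x (\<rho>0 *v x) = (1/3) * complex_of_real (\<Sum>i\<in>UNIV. (cmod (x$i))^2)" for x
    by (simp add: \<rho>0v cinner_smult cinner_self)
  have "psd \<rho>0" unfolding psd_def by (simp add: \<rho>0q sum_nonneg)
  moreover have "mtrace \<rho>0 = 1" by (simp add: mtrace_id \<rho>0_def)
  ultimately have \<rho>0d: "\<rho>0 \<in> density_matrices"
    unfolding density_matrices_def by simp
  have \<rho>0p: "posdef \<rho>0"
    unfolding posdef_def
  proof (intro allI impI)
    fix x :: "complex^3" assume "x \<noteq> 0"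
    then have "Re (cinner x x) > 0" using cinner_self_ge[of x] cinner_self_eq0[of x] by linarith
    then show "Im (cinner x (\<rho>0 *v x)) = 0 \<and> Re (cinner x (\<rho>0 *v x)) > 0"
      by (simp add: \<rho>0v cinner_smult cinner_self)
  qed
  have uniq: "\<rho> = \<rho>0" if "\<rho> \<in> density_matrices" "\<L> \<rho> = 0" for \<rho>
  proof -
    define \<sigma> where "\<sigma> = adj U ** \<rho> ** U"
    have "Lc \<sigma> = adj U ** (U ** Lc \<sigma> ** adj U) ** U" by (simp add: simpU)
    also have "U ** Lc \<sigma> ** adj U = 0" using that(2) by (simp add: LL \<sigma>_def)
    finally have "Lc \<sigma> = 0" by simp
    then have s: "\<sigma> = csmult (\<sigma>$1$1) (mat 1)" by (rule Lc_kernel)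
    have "\<rho> = U ** \<sigma> ** adj U" by (simp add: \<sigma>_def simpU)
    also have "\<dots> = csmult (\<sigma>$1$1) (mat 1)"
      by (subst s) (simp add: csmult_mult_left csmult_mult_right simpU)
    finally have r: "\<rho> = csmult (\<sigma>$1$1) (mat 1)" .
    have "mtrace \<rho> = 1" using that(1) by (simp add: density_matrices_def)
    then have "3 * \<sigma>$1$1 = 1" using r mtrace_id by simp
    then have c: "\<sigma>$1$1 = 1/3" by (simp add: field_simps)
    show ?thesis unfolding \<rho>0_def r c ..
  qed
  have inv1: "inv_proj \<L> (mat 1)"
  proof -
    have "(mat 1 :: complex^3^3) \<noteq> 0" by (simp add: vec_eq_iff mat_def)
    then show ?thesis
      by (simp add: inv_proj_def orth_proj_def corner_invariant_def)
  qed
  have invI: "P = mat 1" if ip: "inv_proj \<L> P" for P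
  proof -
    have nz: "P \<noteq> 0" and op: "orth_proj P" and ci: "corner_invariant \<L> P"
      using ip by (auto simp: inv_proj_def)
    have PP: "P ** P = P" and aP: "adj P = P" using op by (auto simp: orth_proj_def)
    have PP2: "X ** P ** P = X ** P" for X by (simp add: matrix_mul_assoc[symmetric] PP)
    define P' where "P' = adj U ** P ** U"
    have PP': "P = U ** P' ** adj U" by (simp add: P'_def simpU)
    have op': "orth_proj P'"
      unfolding orth_proj_def P'_def
      using aP by (simp add: simpU adj_mult PP2)
    have nz': "P' \<noteq> 0" using nz PP' by auto
    have ci': "corner_invariant Lc P'"
      unfolding corner_invariant_def
    proof
      fix X
      obtain Y where Y: "\<L> (P ** (U ** X ** adj U) ** P) = P ** Y ** P"
        using ci unfolding corner_invariant_def by blast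
      have "Lc (P' ** X ** P') = adj U ** \<L> (P ** (U ** X ** adj U) ** P) ** U"
        unfolding LcL by (simp add: P'_def simpU)
      also have "\<dots> = P' ** (adj U ** Y ** U) ** P'"
        unfolding Y by (simp add: P'_def simpU)
      finally show "\<exists>Y. Lc (P' ** X ** P') = P' ** Y ** P'" by blast
    qed
    have ir: "P' *v (Kc0 *v (P' *v z)) = Kc0 *v (P' *v z) \<and> P' *v (Kc1 *v (P' *v z)) = Kc1 *v (P' *v z)
     \<and> P' *v (Kc2 *v (P' *v z)) = Kc2 *v (P' *v z)" for z
      using inv_range[OF op', of Kc0 Kc1 Kc2] ci' by (simp add: Lc_lindblad)
    have "P' = mat 1"
    proof (rule proj_concrete[OF op' nz'])
      show "P' *v (A0 *v (P' *v z)) = A0 *v (P' *v z)" for z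
        by (rule inv_scale[OF c3_nz]) (use ir in \<open>simp add: Kc0_eq\<close>)
      show "P' *v (A2 *v (P' *v z)) = A2 *v (P' *v z)" for z
        by (rule inv_scale[OF c3_nz]) (use ir in \<open>simp add: Kc2_eq\<close>)
      show "P' *v (B1 *v (P' *v z)) = B1 *v (P' *v z)" for z
        using ir by (simp add: Kc1_eq)
    qed
    then show ?thesis using PP' UU2 by simp
  qed
  have erg: "L_erg \<L>"
    unfolding L_erg_def minimal_inv_proj_def
    using inv1 invI by blast
  show ?thesis
    using erg L\<rho>0 \<rho>0d \<rho>0p uniq by blast
qed

end
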